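(* Let $(A,C,k)$ be an instance with $n$ voters, let $t>0$, and let $W$ be an affordable committee with $|N_c|\le t\frac{n}{k}$ for every $c\in C\setminus W$. Then the utilitarian ratio of $W$ is at least $\min\left(\frac12,\frac{|W|}{2tk}\right)$.
   Context: An instance $(A,C,k)$ consists of a finite nonempty candidate set $C$, voters $N=\{1,\dots,n\}$, approval sets $A_i\subseteq C$, and a committee size $1\le k\le |C|$. $N_c=\{i\in N: c\in A_i\}$. A committee is a set $W\subseteq C$ with $|W|\le k$. $\mathrm{sw}(W)=\sum_{i\in N}|A_i\cap W|$; the utilitarian ratio of $W$ is $\mathrm{sw}(W)/\max\{\mathrm{sw}(W'): |W'|=k\}$. A committee $W$ is affordable if there are functions $p_i:C\to\mathbb{R}_{\ge0}$ ($i\in N$) with: $p_i(c)=0$ whenever $c\notin A_i$; $\sum_{c}p_i(c)\le k/n$ for all $i$; $\sum_i p_i(c)=1$ for all $c\in W$; $\sum_i p_i(c)=0$ for all $c\notin W$. *)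

theory Defs
  imports Main "HOL-Library.Multiset" Complex_Main
begin

definition is_instance :: "'c set \<Rightarrow> nat \<Rightarrow> (nat \<Rightarrow> 'c set) \<Rightarrow> nat \<Rightarrow> bool" where
  "is_instance C n A k \<longleftrightarrow> finite C \<and> C \<noteq> {} \<and> n \<ge> 1 \<and>
     (\<forall>i\<in>{1..n}. A i \<subseteq> C) \<and> 1 \<le> k \<and> k \<le> card C"

definition is_committee :: "'c set \<Rightarrow> nat \<Rightarrow> 'c set \<Rightarrow> bool" where
  "is_committee C k W \<longleftrightarrow> W \<subseteq> C \<and> card W \<le> k"

definition supporters :: "nat \<Rightarrow> (nat \<Rightarrow> 'c set) \<Rightarrow> 'c \<Rightarrow> nat set" where
  "supporters n A c = {i\<in>{1..n}. c \<in> A i}"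

definition sw :: "nat \<Rightarrow> (nat \<Rightarrow> 'c set) \<Rightarrow> 'c set \<Rightarrow> nat" where
  "sw n A W = (\<Sum>i\<in>{1..n}. card (A i \<inter> W))"

definition max_sw :: "'c set \<Rightarrow> nat \<Rightarrow> (nat \<Rightarrow> 'c set) \<Rightarrow> nat \<Rightarrow> nat" where
  "max_sw C n A k = Max {sw n A W' | W'. W' \<subseteq> C \<and> card W' = k}"

definition util_ratio :: "'c set \<Rightarrow> nat \<Rightarrow> (nat \<Rightarrow> 'c set) \<Rightarrow> nat \<Rightarrow> 'c set \<Rightarrow> real" where
  "util_ratio C n A k W = real (sw n A W) / real (max_sw C n A k)"

definition affordable :: "'c set \<Rightarrow> nat \<Rightarrow> (nat \<Rightarrow> 'c set) \<Rightarrow> nat \<Rightarrow> 'c set \<Rightarrow> bool" where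
  "affordable C n A k W \<longleftrightarrow> (\<exists>p :: nat \<Rightarrow> 'c \<Rightarrow> real.
     (\<forall>i\<in>{1..n}. \<forall>c\<in>C. p i c \<ge> 0) \<and>
     (\<forall>i\<in>{1..n}. \<forall>c\<in>C. c \<notin> A i \<longrightarrow> p i c = 0) \<and>
     (\<forall>i\<in>{1..n}. (\<Sum>c\<in>C. p i c) \<le> real k / real n) \<and>
     (\<forall>c\<in>W. (\<Sum>i\<in>{1..n}. p i c) = 1) \<and>
     (\<forall>c\<in>C - W. (\<Sum>i\<in>{1..n}. p i c) = 0))"

end

theory Submission
  imports Defs
begin

lemma sw_eq:
  assumes "finite W'"
  shows "sw n A W' = (\<Sum>c\<in>W'. card (supporters n A c))"
proof -
  have "sw n A W' = (\<Sum>i\<in>{1..n}. \<Sum>c\<in>W'. (if c \<in> A i then 1 else 0::nat))"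
    unfolding sw_def
  proof (rule sum.cong[OF refl])
    fix i
    have "card (A i \<inter> W') = card {c\<in>W'. c \<in> A i}" by (metis Int_def inf_commute Collect_conj_eq Collect_mem_eq)
    also have "\<dots> = (\<Sum>c\<in>W'. (if c \<in> A i then 1 else 0::nat))"
      using assms by (simp add: sum.If_cases Int_def conj_commute)
    finally show "card (A i \<inter> W') = (\<Sum>c\<in>W'. (if c \<in> A i then 1 else 0::nat))" .
  qed
  also have "\<dots> = (\<Sum>c\<in>W'. \<Sum>i\<in>{1..n}. (if c \<in> A i then 1 else 0::nat))"
    by (rule sum.swap)
  also have "\<dots> = (\<Sum>c\<in>W'. card (supporters n A c))"
    unfolding supporters_def by (intro sum.cong refl) (simp add: sum.If_cases, intro arg_cong[where f=card], auto)
  finally show ?thesis .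
qed

theorem lemma2:
  fixes C :: "'c set" and n k :: nat and A :: "nat \<Rightarrow> 'c set" and W :: "'c set" and t :: real
  assumes "is_instance C n A k"
    and "is_committee C k W"
    and "t > 0"
    and "affordable C n A k W"
    and "\<forall>c\<in>C - W. real (card (supporters n A c)) \<le> t * real n / real k"
  shows "util_ratio C n A k W \<ge> min (1/2) (real (card W) / (2 * t * real k))"
proof -
  note inst = assms(1)[unfolded is_instance_def]
  have finC: "finite C" and n1: "n \<ge> 1" and k1: "1 \<le> k" and kC: "k \<le> card C"
    using inst by auto
  have WC: "W \<subseteq> C" and Wk: "card W \<le> k" using assms(2) by (auto simp: is_committee_def)
  have finW: "finite W" using WC finC finite_subset by auto
  obtain p :: "nat \<Rightarrow> 'c \<Rightarrow> real" where
    p0: "\<forall>i\<in>{1..n}. \<forall>c\<in>C. p i c \<ge> 0" and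
    pA: "\<forall>i\<in>{1..n}. \<forall>c\<in>C. c \<notin> A i \<longrightarrow> p i c = 0" and
    pb: "\<forall>i\<in>{1..n}. (\<Sum>c\<in>C. p i c) \<le> real k / real n" and
    pW: "\<forall>c\<in>W. (\<Sum>i\<in>{1..n}. p i c) = 1"
    using assms(4) unfolding affordable_def by blast
  define s where "s c = real (card (supporters n A c))" for c
  have swr: "real (sw n A W') = (\<Sum>c\<in>W'. s c)" if "finite W'" for W'
    using sw_eq[OF that] unfolding s_def by simp
  have slow: "s c \<ge> real n / real k" if cW: "c \<in> W" for c
  proof -
    have cC: "c \<in> C" using cW WC by auto
    have "1 = (\<Sum>i\<in>{1..n}. p i c)" using pW cW by auto
    also have "\<dots> = (\<Sum>i\<in>supporters n A c. p i c)"
      unfolding supporters_def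
      by (rule sum.mono_neutral_right) (use pA cC in auto)
    also have "\<dots> \<le> (\<Sum>i\<in>supporters n A c. real k / real n)"
    proof (rule sum_mono)
      fix i assume i: "i \<in> supporters n A c"
      hence i1: "i \<in> {1..n}" by (simp add: supporters_def)
      have "p i c \<le> (\<Sum>c\<in>C. p i c)"
        by (rule member_le_sum) (use p0 i1 cC finC in auto)
      thus "p i c \<le> real k / real n" using pb i1 by force
    qed
    also have "\<dots> = s c * (real k / real n)" by (simp add: s_def)
    finally have "1 \<le> s c * (real k / real n)" .
    thus ?thesis using n1 k1 by (simp add: field_simps)
  qed
  have s0: "s c \<ge> 0" for c by (simp add: s_def)
  define S where "S = real (sw n A W)"
  have SW: "S \<ge> real (card W) * (real n / real k)"
  proof -
    have "real (card W) * (real n / real k) = (\<Sum>c\<in>W. real n / real k)" by simp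
    also have "\<dots> \<le> (\<Sum>c\<in>W. s c)" by (rule sum_mono) (use slow in auto)
    finally show ?thesis using swr[OF finW] S_def by simp
  qed
  define F where "F = {sw n A W' | W'. W' \<subseteq> C \<and> card W' = k}"
  have finF: "finite F"
  proof -
    have "F \<subseteq> (sw n A) ` Pow C" unfolding F_def by auto
    thus ?thesis using finC finite_subset by blast
  qed
  have Fne: "F \<noteq> {}"
  proof -
    obtain B where "B \<subseteq> C" "card B = k" using kC obtain_subset_with_card_n by metis
    thus ?thesis unfolding F_def by auto
  qed
  have Mdef: "max_sw C n A k = Max F" unfolding max_sw_def F_def by simp
  obtain Ws where Ws: "Ws \<subseteq> C" "card Ws = k" "max_sw C n A k = sw n A Ws"
    using Max_in[OF finF Fne] unfolding Mdef F_def by auto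
  have finWs: "finite Ws" using Ws finC finite_subset by auto
  define M where "M = real (max_sw C n A k)"
  have Mup: "M \<le> S + t * real n"
  proof -
    have "M = (\<Sum>c\<in>Ws. s c)" using Ws swr[OF finWs] M_def by simp
    also have "\<dots> = (\<Sum>c\<in>Ws \<inter> W. s c) + (\<Sum>c\<in>Ws - W. s c)"
      using finWs by (metis Diff_Int_distrib2 Int_Diff_Un sum.union_inter_neutral Int_Diff_disjoint finite_Int finite_Diff Diff_Diff_Int sum.Int_Diff)
    also have "(\<Sum>c\<in>Ws \<inter> W. s c) \<le> (\<Sum>c\<in>W. s c)"
      by (rule sum_mono2) (use finW s0 in auto)
    also have "(\<Sum>c\<in>Ws - W. s c) \<le> (\<Sum>c\<in>Ws - W. t * real n / real k)"
      by (rule sum_mono) (use assms(5) Ws in \<open>auto simp: s_def\<close>)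
    also have "\<dots> = real (card (Ws - W)) * (t * real n / real k)" by simp
    also have "\<dots> \<le> real k * (t * real n / real k)"
    proof (rule mult_right_mono)
      have "card (Ws - W) \<le> card Ws" using finWs by (simp add: card_mono)
      thus "real (card (Ws - W)) \<le> real k" using Ws by simp
      show "0 \<le> t * real n / real k" using assms(3) by simp
    qed
    also have "\<dots> = t * real n" using k1 by simp
    finally show ?thesis using swr[OF finW] S_def by simp
  qed
  have ratio: "util_ratio C n A k W = S / M" unfolding util_ratio_def S_def M_def by simp
  show ?thesis
  proof (cases "W = {}")
    case True
    have "S / M \<ge> 0" unfolding S_def M_def by simp
    thus ?thesis using True ratio by simp
  next
    case False
    hence wpos: "card W > 0" using finW by auto
    define w where "w = real (card W)"
    have w0: "w > 0" using wpos w_def by simp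
    have Spos: "S > 0"
    proof -
      have "real (card W) * (real n / real k) > 0" using wpos n1 k1 by simp
      thus ?thesis using SW by linarith
    qed
    obtain B where B: "B \<subseteq> C - W" "card B = k - card W"
    proof -
      have "card (C - W) = card C - card W" using WC finW by (simp add: card_Diff_subset)
      hence "k - card W \<le> card (C - W)" using kC by simp
      thus ?thesis using that obtain_subset_with_card_n by metis
    qed
    have finB: "finite B" using B finC finite_subset by blast
    have WBd: "W \<inter> B = {}" using B by auto
    have WB: "W \<union> B \<subseteq> C" "card (W \<union> B) = k"
      using B WC apply auto[1]
      using card_Un_disjoint[OF finW finB WBd] B Wk by simp
    have "sw n A (W \<union> B) \<in> F" unfolding F_def using WB by blast
    hence "sw n A (W \<union> B) \<le> max_sw C n A k" unfolding Mdef using finF by simp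
    moreover have "sw n A W \<le> sw n A (W \<union> B)"
      using finW finB by (simp add: sw_eq sum_mono2)
    ultimately have SM: "S \<le> M" unfolding S_def M_def by linarith
    have Mpos: "M > 0" using SM Spos by linarith
    have tn: "t * real n \<le> S * t * real k / w"
    proof -
      have "w * (real n / real k) \<le> S" using SW w_def by simp
      hence "w * real n \<le> S * real k" using k1 by (simp add: field_simps)
      hence "t * (w * real n) \<le> t * (S * real k)" using assms(3) by simp
      thus ?thesis using w0 by (simp add: field_simps)
    qed
    have "M * w \<le> (S + t * real n) * w" using Mup w0 by (intro mult_right_mono) auto
    also have "\<dots> = S * w + (t * real n) * w" by (simp add: algebra_simps)
    also have "\<dots> \<le> S * w + (S * t * real k / w) * w" using tn w0 by (intro add_left_mono mult_right_mono) auto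
    also have "\<dots> = S * (w + t * real k)" using w0 by (simp add: field_simps)
    finally have "M \<le> S * (w + t * real k) / w"
      using w0 by (simp add: field_simps)
    hence "S / M \<ge> S / (S * (w + t * real k) / w)"
      using Mpos Spos w0 assms(3) by (intro divide_left_mono) (auto intro!: mult_pos_pos divide_pos_pos add_pos_nonneg)
    also have "S / (S * (w + t * real k) / w) = w / (w + t * real k)"
    proof -
      have "w + t * real k > 0" using w0 assms(3) by (simp add: add_pos_nonneg)
      have "S / (S * (w + t * real k) / w) = (S * w) / (S * (w + t * real k))" by simp
      also have "\<dots> = w / (w + t * real k)" using Spos by (rule mult_divide_mult_cancel_left[OF less_imp_neq[symmetric]])
      finally show ?thesis .
    qed
    finally have R: "S / M \<ge> w / (w + t * real k)" .
    have tk: "t * real k > 0" using assms(3) k1 by simp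
    have "min (1/2) (w / (2 * t * real k)) \<le> w / (w + t * real k)"
    proof (cases "w \<ge> t * real k")
      case True
      hence "1/2 \<le> w / (w + t * real k)" using w0 tk by (simp add: field_simps)
      thus ?thesis by (rule min.coboundedI1)
    next
      case False
      hence "w / (2 * t * real k) \<le> w / (w + t * real k)"
        using w0 tk by (intro divide_left_mono) auto
      thus ?thesis by (rule min.coboundedI2)
    qed
    thus ?thesis using R ratio w_def by simp
  qed
qed

end
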